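(* Let $G$ be a finite graph with $n$ vertices and $t$ a positive integer with prime factorization $t=\prod_{i=1}^s p_i^{r_i}$. Write $Z_t\times Z_2=\{(\rho^i,\sigma^j): 0\le i\le t-1,\ j\in\{0,1\}\}$ (with $\rho$ of order $t$, $\sigma$ of order 2) and $D_t\times Z_2=\{(\rho^i,\sigma^j),(\tau\rho^i,\sigma^j): 0\le i\le t-1,\ j\in\{0,1\}\}$ (with $\rho,\tau$ the rotation and reflection generating $D_t$), and when $\mathrm{Aut}(G)$ is isomorphic to one of these groups denote by $\pi_g$ the automorphism corresponding to the group element $g$. Let $P_0^*=\{\pi_{(\rho^0,\sigma)}\}$ if $t$ is odd and $P_0^*=\{\pi_{(\rho^0,\sigma)},\pi_{(\rho^{t/2},\sigma)}\}$ if $t$ is even, and let $P^*=P_0^*\cup\{\pi_{(\rho^{t/p_i},\sigma^0)}: i=1,\dots,s\}$. Then for every positive integer $k$: (i) if $\mathrm{Aut}(G)\cong Z_t\times Z_2$, then $L(G,k)=\sum_{P\subseteq P^*}(-1)^{|P|}N_{\ge}(P)$; (ii) if $\mathrm{Aut}(G)\cong D_t\times Z_2$, then for $b\in\{0,1\}$ and $0\le i\le t-1$, $$N_=(\{\pi_{(\rho^0,\sigma^0)},\pi_{(\tau\rho^i,\sigma^b)}\})=\sum_{\{\pi_{(\tau\rho^i,\sigma^b)}\}\subseteq P\subseteq\{\pi_{(\tau\rho^i,\sigma^b)}\}\cup P^*}(-1)^{|P|-1}N_{\ge}(P),$$ and $$L(G,k)=\sum_{P\subseteq P^*}(-1)^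{|P|}N_{\ge}(P)-\sum_{b=0}^{1}\sum_{i=0}^{t-1}N_=(\{\pi_{(\rho^0,\sigma^0)},\pi_{(\tau\rho^i,\sigma^b)}\}).$$
   Context: A $k$-labeling of $G$ is a map $\phi:V(G)\to\{1,\dots,k\}$; an automorphism $\pi$ preserves $\phi$ if $\phi(\pi(v))=\phi(v)$ for all $v$; $\phi$ is distinguishing if only the identity preserves it; $L(G,k)$ is the number of distinguishing $k$-labelings. For $P\subseteq\mathrm{Aut}(G)$, $N_{\ge}(P)$ is the number of $k$-labelings preserved by every automorphism in $P$ (so $N_{\ge}(\emptyset)=k^n$), and $N_=(P)$ is the number of $k$-labelings whose set of preserving automorphisms is exactly $P$. *)

theory Defs
  imports "HOL-Library.FuncSet" "HOL-Computational_Algebra.Primes"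
begin

definition is_graph :: "'a set \<Rightarrow> ('a \<Rightarrow> 'a \<Rightarrow> bool) \<Rightarrow> bool" where
  "is_graph V E \<longleftrightarrow> finite V \<and> (\<forall>x y. E x y \<longrightarrow> E y x) \<and> (\<forall>x. \<not> E x x)
     \<and> (\<forall>x y. E x y \<longrightarrow> x \<in> V \<and> y \<in> V)"

definition auts :: "'a set \<Rightarrow> ('a \<Rightarrow> 'a \<Rightarrow> bool) \<Rightarrow> ('a \<Rightarrow> 'a) set" where
  "auts V E = {f. bij_betw f V V \<and> (\<forall>x. x \<notin> V \<longrightarrow> f x = x)
                 \<and> (\<forall>x\<in>V. \<forall>y\<in>V. E x y \<longleftrightarrow> E (f x) (f y))}"

definition labelings :: "'a set \<Rightarrow> nat \<Rightarrow> ('a \<Rightarrow> nat) set" where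
  "labelings V k = V \<rightarrow>\<^sub>E {1..k}"

definition preserves :: "'a set \<Rightarrow> ('a \<Rightarrow> 'a) \<Rightarrow> ('a \<Rightarrow> nat) \<Rightarrow> bool" where
  "preserves V f \<phi> \<longleftrightarrow> (\<forall>v\<in>V. \<phi> (f v) = \<phi> v)"

definition distinguishing :: "'a set \<Rightarrow> ('a \<Rightarrow> 'a \<Rightarrow> bool) \<Rightarrow> ('a \<Rightarrow> nat) \<Rightarrow> bool" where
  "distinguishing V E \<phi> \<longleftrightarrow> (\<forall>f\<in>auts V E. preserves V f \<phi> \<longrightarrow> f = id)"

definition Lcount :: "'a set \<Rightarrow> ('a \<Rightarrow> 'a \<Rightarrow> bool) \<Rightarrow> nat \<Rightarrow> nat" where
  "Lcount V E k = card {\<phi> \<in> labelings V k. distinguishing V E \<phi>}"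

definition Nge :: "'a set \<Rightarrow> nat \<Rightarrow> ('a \<Rightarrow> 'a) set \<Rightarrow> nat" where
  "Nge V k P = card {\<phi> \<in> labelings V k. \<forall>f\<in>P. preserves V f \<phi>}"

definition Neq :: "'a set \<Rightarrow> ('a \<Rightarrow> 'a \<Rightarrow> bool) \<Rightarrow> nat \<Rightarrow> ('a \<Rightarrow> 'a) set \<Rightarrow> nat" where
  "Neq V E k P = card {\<phi> \<in> labelings V k. {f \<in> auts V E. preserves V f \<phi>} = P}"

text \<open>pi i j = automorphism corresponding to (rho^i, sigma^j) under an isomorphism
  Z_t x Z_2 -> Aut(G) (group law of Aut(G) = composition).\<close>
definition cyc2_iso :: "'a set \<Rightarrow> ('a \<Rightarrow> 'a \<Rightarrow> bool) \<Rightarrow> nat \<Rightarrow> (nat \<Rightarrow> nat \<Rightarrow> 'a \<Rightarrow> 'a) \<Rightarrow> bool" where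
  "cyc2_iso V E t \<pi> \<longleftrightarrow>
     bij_betw (\<lambda>(i, j). \<pi> i j) ({..<t} \<times> {..<2}) (auts V E) \<and>
     (\<forall>i<t. \<forall>j<2. \<forall>i'<t. \<forall>j'<2.
        \<pi> i j \<circ> \<pi> i' j' = \<pi> ((i + i') mod t) ((j + j') mod 2))"

text \<open>pi a i j = automorphism corresponding to (tau^a rho^i, sigma^j) (a = True means tau present)
  under an isomorphism D_t x Z_2 -> Aut(G); rho^i tau = tau rho^(-i).\<close>
definition dih2_iso :: "'a set \<Rightarrow> ('a \<Rightarrow> 'a \<Rightarrow> bool) \<Rightarrow> nat \<Rightarrow> (bool \<Rightarrow> nat \<Rightarrow> nat \<Rightarrow> 'a \<Rightarrow> 'a) \<Rightarrow> bool" where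
  "dih2_iso V E t \<pi> \<longleftrightarrow>
     bij_betw (\<lambda>(a, i, j). \<pi> a i j) (UNIV \<times> {..<t} \<times> {..<2}) (auts V E) \<and>
     (\<forall>a b. \<forall>i<t. \<forall>j<2. \<forall>i'<t. \<forall>j'<2.
        \<pi> a i j \<circ> \<pi> b i' j' =
          \<pi> (a \<noteq> b) (((if b then t - i else i) + i') mod t) ((j + j') mod 2))"

definition Pstar_cyc :: "nat \<Rightarrow> (nat \<Rightarrow> nat \<Rightarrow> 'b) \<Rightarrow> 'b set" where
  "Pstar_cyc t \<pi> = (if odd t then {\<pi> 0 1} else {\<pi> 0 1, \<pi> (t div 2) 1})
      \<union> {\<pi> (t div p) 0 | p. prime p \<and> p dvd t}"

definition Pstar_dih :: "nat \<Rightarrow> (bool \<Rightarrow> nat \<Rightarrow> nat \<Rightarrow> 'b) \<Rightarrow> 'b set" where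
  "Pstar_dih t \<pi> = Pstar_cyc t (\<pi> False)"

end

theory Submission
  imports Defs
begin


lemma sum_pow_alt:
  assumes "finite T"
  shows "(\<Sum>P\<in>Pow T. (-1::int) ^ card P) = (if T = {} then 1 else 0)"
  using assms
proof (induction T rule: finite_induct)
  case empty
  then show ?case by simp
next
  case (insert a T)
  have inj: "inj_on (insert a) (Pow T)"
    using insert(2) by (auto simp: inj_on_def)
  have disj: "Pow T \<inter> insert a ` Pow T = {}" using insert(2) by auto
  have "(\<Sum>P\<in>Pow (insert a T). (-1::int) ^ card P)
      = (\<Sum>P\<in>Pow T. (-1::int) ^ card P) + (\<Sum>P\<in>insert a ` Pow T. (-1::int) ^ card P)"
    unfolding Pow_insert using insert(1) disj by (intro sum.union_disjoint) auto
  also have "(\<Sum>P\<in>insert a ` Pow T. (-1::int) ^ card P) = (\<Sum>P\<in>Pow T. (-1::int) ^ card (insert a P))"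
    using inj by (simp add: sum.reindex)
  also have "\<dots> = (\<Sum>P\<in>Pow T. - ((-1::int) ^ card P))"
  proof (rule sum.cong)
    fix P assume "P \<in> Pow T"
    then have "finite P" "a \<notin> P" using insert(1,2) finite_subset by auto
    then show "(-1::int) ^ card (insert a P) = - ((-1) ^ card P)" by simp
  qed simp
  finally show ?case by (simp add: sum_negf)
qed

lemma card_as_sum:
  assumes "finite A"
  shows "int (card {x\<in>A. R x}) = (\<Sum>x\<in>A. if R x then 1 else 0)"
  using sum.inter_filter[OF assms, of "\<lambda>_. (1::int)" R] by simp

lemma IE:
  assumes "finite A" "finite S"
  shows "int (card {x\<in>A. \<forall>f\<in>S. \<not> Q f x}) =
         (\<Sum>P\<in>Pow S. (-1) ^ card P * int (card {x\<in>A. \<forall>f\<in>P. Q f x}))"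
proof -
  have "(\<Sum>P\<in>Pow S. (-1) ^ card P * int (card {x\<in>A. \<forall>f\<in>P. Q f x}))
     = (\<Sum>P\<in>Pow S. \<Sum>x\<in>A. (if (\<forall>f\<in>P. Q f x) then (-1) ^ card P else 0))"
    by (simp add: card_as_sum[OF assms(1)] sum_distrib_left if_distrib cong: if_cong)
  also have "\<dots> = (\<Sum>x\<in>A. \<Sum>P\<in>Pow S. (if (\<forall>f\<in>P. Q f x) then (-1) ^ card P else 0))"
    by (rule sum.swap)
  also have "\<dots> = (\<Sum>x\<in>A. if (\<forall>f\<in>S. \<not> Q f x) then 1 else 0)"
  proof (rule sum.cong)
    fix x assume "x \<in> A"
    have "(\<Sum>P\<in>Pow S. (if (\<forall>f\<in>P. Q f x) then (-1::int) ^ card P else 0))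
        = (\<Sum>P\<in>{P\<in>Pow S. \<forall>f\<in>P. Q f x}. (-1::int) ^ card P)"
      using sum.inter_filter[of "Pow S" "\<lambda>P. (-1::int) ^ card P" "\<lambda>P. \<forall>f\<in>P. Q f x"] assms(2)
      by simp
    also have "{P\<in>Pow S. \<forall>f\<in>P. Q f x} = Pow (S \<inter> {f. Q f x})" by auto
    also have "(\<Sum>P\<in>Pow (S \<inter> {f. Q f x}). (-1::int) ^ card P) = (if S \<inter> {f. Q f x} = {} then 1 else 0)"
      using assms(2) by (intro sum_pow_alt) auto
    finally show "(\<Sum>P\<in>Pow S. (if (\<forall>f\<in>P. Q f x) then (-1::int) ^ card P else 0))
        = (if (\<forall>f\<in>S. \<not> Q f x) then 1 else 0)" by auto
  qed simp
  finally show ?thesis by (simp add: card_as_sum[OF assms(1)])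
qed



lemma key_mult:
  fixes S :: "nat \<Rightarrow> nat \<Rightarrow> bool"
  assumes t: "t > 0"
  and comp: "\<And>i j i' j'. i<t \<Longrightarrow> j<2 \<Longrightarrow> i'<t \<Longrightarrow> j'<2 \<Longrightarrow> S i j \<Longrightarrow> S i' j' \<Longrightarrow> S ((i+i') mod t) ((j+j') mod 2)"
  and S00: "S 0 0" and Sij: "S i j" and ij: "i<(t::nat)" "j<(2::nat)"
  shows "S ((n*i) mod t) ((n*j) mod 2)"
proof (induction n)
  case 0
  then show ?case using S00 by simp
next
  case (Suc n)
  have "S ((i + (n*i) mod t) mod t) ((j + (n*j) mod 2) mod 2)"
    using comp[OF ij _ _ Sij Suc] t by simp
  then show ?case by (simp add: mod_add_right_eq)
qed

lemma key0:
  fixes S :: "nat \<Rightarrow> nat \<Rightarrow> bool"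
  assumes t: "t > 0"
  and comp: "\<And>i j i' j'. i<t \<Longrightarrow> j<2 \<Longrightarrow> i'<t \<Longrightarrow> j'<2 \<Longrightarrow> S i j \<Longrightarrow> S i' j' \<Longrightarrow> S ((i+i') mod t) ((j+j') mod 2)"
  and S00: "S 0 0" and Si: "S i 0" and i: "0 < i" "i<(t::nat)"
  shows "\<exists>p. prime p \<and> p dvd t \<and> S (t div p) 0"
proof -
  define g where "g = gcd i t"
  obtain x y where xy: "i * x = t * y + g" using bezout_nat[of i t] i unfolding g_def by auto
  have gpos: "g > 0" using i unfolding g_def by simp
  have gle: "g \<le> i" unfolding g_def using i by (simp add: gcd_le1_nat)
  have gdvd: "g dvd t" unfolding g_def by simp
  then obtain q where q: "t = g * q" by blast
  have q1: "q \<noteq> 1" using q gle i by auto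
  obtain p where p: "prime p" "p dvd q" using prime_factor_nat[OF q1] by blast
  then obtain r where r: "q = p * r" by blast
  have ppos: "p > 0" using p prime_gt_0_nat by blast
  have tp: "t div p = g * r" using q r ppos by simp
  have tplt: "t div p < t" using t p prime_gt_1_nat by simp
  have "S (((x*r)*i) mod t) (((x*r)*0) mod 2)"
    by (rule key_mult[OF t comp S00 Si]) (use i in auto)
  moreover have "((x*r)*i) mod t = t div p"
  proof -
    have "(x*r)*i = (i*x) * r" by (simp add: algebra_simps)
    also have "\<dots> = (t*y + g) * r" using xy by simp
    also have "\<dots> = t * (y*r) + t div p" using tp by (simp add: algebra_simps)
    finally show ?thesis using tplt by simp
  qed
  ultimately have "S (t div p) 0" by simp
  moreover have "p dvd t" using p q r by simp
  ultimately show ?thesis using p by blast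
qed

lemma key:
  fixes S :: "nat \<Rightarrow> nat \<Rightarrow> bool"
  assumes t: "t > 0"
  and comp: "\<And>i j i' j'. i<t \<Longrightarrow> j<2 \<Longrightarrow> i'<t \<Longrightarrow> j'<2 \<Longrightarrow> S i j \<Longrightarrow> S i' j' \<Longrightarrow> S ((i+i') mod t) ((j+j') mod 2)"
  and S00: "S 0 0" and Sij: "S i j" and ij: "i<(t::nat)" "j<(2::nat)" "(i,j) \<noteq> (0,0)"
  shows "S 0 1 \<or> (even t \<and> S (t div 2) 1) \<or> (\<exists>p. prime p \<and> p dvd t \<and> S (t div p) 0)"
proof (cases "j = 0")
  case True
  then show ?thesis using key0[OF t comp S00] Sij ij by auto
next
  case False
  then have j1: "j = 1" using ij by auto
  show ?thesis
  proof (cases "odd t")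
    case True
    have "S ((t*i) mod t) ((t*j) mod 2)" by (rule key_mult[OF t comp S00 Sij ij(1,2)])
    then show ?thesis using True j1 by (simp add: odd_iff_mod_2_eq_one)
  next
    case False
    have S2: "S ((2*i) mod t) ((2*j) mod 2)" by (rule key_mult[OF t comp S00 Sij ij(1,2)])
    show ?thesis
    proof (cases "(2*i) mod t = 0")
      case True
      then have "t dvd 2*i" by auto
      then obtain c where c: "2*i = t*c" by blast
      have "c < 2"
      proof (rule ccontr)
        assume "\<not> c < 2"
        then have "t*2 \<le> t*c" by simp
        then show False using c ij(1) by linarith
      qed
      then have "c = 0 \<or> c = 1" by auto
      then have "i = 0 \<or> i = t div 2" using c by auto
      then show ?thesis using Sij j1 False by auto
    next
      case nz: False
      have "0 < (2*i) mod t" "(2*i) mod t < t" using nz t by auto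
      then show ?thesis using key0[OF t comp S00] S2 by auto
    qed
  qed
qed



definition cycfam :: "'a set \<Rightarrow> ('a \<Rightarrow> 'a \<Rightarrow> bool) \<Rightarrow> nat \<Rightarrow> (nat \<Rightarrow> nat \<Rightarrow> 'a \<Rightarrow> 'a) \<Rightarrow> bool" where
  "cycfam V E t \<rho> \<longleftrightarrow> (\<forall>i<t. \<forall>j<2. \<rho> i j \<in> auts V E) \<and>
     (\<forall>i<t. \<forall>j<2. \<forall>i'<t. \<forall>j'<2. \<rho> i j \<circ> \<rho> i' j' = \<rho> ((i+i') mod t) ((j+j') mod 2)) \<and>
     \<rho> 0 0 = id \<and> inj_on (\<lambda>(i,j). \<rho> i j) ({..<t}\<times>{..<2})"

lemma id_auts: "id \<in> auts V E"
  unfolding auts_def by auto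

lemma auts_V: "f \<in> auts V E \<Longrightarrow> x \<in> V \<Longrightarrow> f x \<in> V"
  unfolding auts_def bij_betw_def by auto

lemma pres_comp: "preserves V f \<phi> \<Longrightarrow> preserves V g \<phi> \<Longrightarrow> g \<in> auts V E \<Longrightarrow> preserves V (f \<circ> g) \<phi>"
  unfolding preserves_def using auts_V by fastforce

lemma pres_id: "preserves V id \<phi>"
  unfolding preserves_def by simp

lemma nontriv:
  assumes cf: "cycfam V E t \<rho>" and t: "t > 0" and ij: "i<t" "j<(2::nat)" "(i,j) \<noteq> (0,0)"
    and p: "preserves V (\<rho> i j) \<phi>"
  shows "\<exists>f\<in>Pstar_cyc t \<rho>. preserves V f \<phi>"
proof -
  define S where "S = (\<lambda>i j. preserves V (\<rho> i j) \<phi>)"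
  have comp: "S ((i+i') mod t) ((j+j') mod 2)"
    if "i<t" "j<2" "i'<t" "j'<2" "S i j" "S i' j'" for i j i' j'
  proof -
    have "\<rho> i j \<circ> \<rho> i' j' = \<rho> ((i+i') mod t) ((j+j') mod 2)" using cf that unfolding cycfam_def by blast
    moreover have "\<rho> i' j' \<in> auts V E" using cf that unfolding cycfam_def by blast
    ultimately show ?thesis using pres_comp that unfolding S_def by metis
  qed
  have S00: "S 0 0" using cf pres_id unfolding S_def cycfam_def by metis
  have "S 0 1 \<or> (even t \<and> S (t div 2) 1) \<or> (\<exists>p. prime p \<and> p dvd t \<and> S (t div p) 0)"
    by (rule key[OF t comp S00 _ ij]) (use p S_def in auto)
  then show ?thesis unfolding S_def Pstar_cyc_def by auto
qed

lemma Pstar_elems: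
  assumes "f \<in> Pstar_cyc t \<rho>" "t > 0"
  shows "\<exists>i j. f = \<rho> i j \<and> i<t \<and> j<2 \<and> (i,j) \<noteq> (0,0)"
proof -
  have "f = \<rho> 0 1 \<or> (even t \<and> f = \<rho> (t div 2) 1) \<or> (\<exists>p. prime p \<and> p dvd t \<and> f = \<rho> (t div p) 0)"
    using assms(1) unfolding Pstar_cyc_def by (cases "odd t") auto
  then show ?thesis
  proof (elim disjE exE conjE)
    assume "f = \<rho> 0 1" then show ?thesis using assms by (intro exI[of _ 0] exI[of _ 1]) auto
  next
    assume "even t" "f = \<rho> (t div 2) 1" then show ?thesis using assms by (intro exI[of _ "t div 2"] exI[of _ 1]) auto
  next
    fix p assume p: "prime p" "p dvd t" "f = \<rho> (t div p) 0"
    have "t div p < t" using p assms(2) prime_gt_1_nat by simp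
    moreover have "t div p \<noteq> 0" using p assms(2) by (metis dvd_div_eq_0_iff gr_implies_not0)
    ultimately show ?thesis using p by (intro exI[of _ "t div p"] exI[of _ 0]) auto
  qed
qed

lemma Pstar_finite: "finite (Pstar_cyc t \<rho>)" if "t > 0"
proof -
  have "{\<rho> (t div p) 0 | p. prime p \<and> p dvd t} = (\<lambda>p. \<rho> (t div p) 0) ` {p. prime p \<and> p dvd t}" by blast
  moreover have "{p. prime p \<and> p dvd t} \<subseteq> {..t}"
    using that by (auto dest: dvd_imp_le)
  then have "finite {p. prime p \<and> p dvd t}"
    by (rule finite_subset) simp
  ultimately have "finite {\<rho> (t div p) 0 | p. prime p \<and> p dvd t}" by simp
  then show ?thesis unfolding Pstar_cyc_def by simp
qed

lemma Pstar_props: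
  assumes cf: "cycfam V E t \<rho>" and t: "t > 0" and f: "f \<in> Pstar_cyc t \<rho>"
  shows "f \<in> auts V E" "f \<noteq> id"
proof -
  obtain i j where ij: "f = \<rho> i j" "i<t" "j<2" "(i,j) \<noteq> (0,0)" using Pstar_elems[OF f t] by blast
  show "f \<in> auts V E" using cf ij unfolding cycfam_def by blast
  have "\<rho> i j \<noteq> \<rho> 0 0"
  proof
    assume "\<rho> i j = \<rho> 0 0"
    moreover have "inj_on (\<lambda>(i,j). \<rho> i j) ({..<t}\<times>{..<2})" using cf unfolding cycfam_def by blast
    ultimately have "(i,j) = (0,0)" using ij t unfolding inj_on_def by fastforce
    then show False using ij by blast
  qed
  then show "f \<noteq> id" using cf ij unfolding cycfam_def by simp
qed

lemma distinguishing_iff: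
  assumes cf: "cycfam V E t \<rho>" and t: "t > 0" and surj: "auts V E \<subseteq> {\<rho> i j | i j. i<t \<and> j<2}"
  shows "distinguishing V E \<phi> \<longleftrightarrow> (\<forall>f\<in>Pstar_cyc t \<rho>. \<not> preserves V f \<phi>)"
proof
  assume "distinguishing V E \<phi>"
  then show "\<forall>f\<in>Pstar_cyc t \<rho>. \<not> preserves V f \<phi>"
    using Pstar_props[OF cf t] unfolding distinguishing_def by blast
next
  assume np: "\<forall>f\<in>Pstar_cyc t \<rho>. \<not> preserves V f \<phi>"
  show "distinguishing V E \<phi>" unfolding distinguishing_def
  proof (intro ballI impI)
    fix f assume f: "f \<in> auts V E" "preserves V f \<phi>"
    then obtain i j where ij: "f = \<rho> i j" "i<t" "j<2" using surj by blast
    show "f = id"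
    proof (cases "(i,j) = (0,0)")
      case True then show ?thesis using cf ij unfolding cycfam_def by simp
    next
      case False then show ?thesis using nontriv[OF cf t ij(2,3) False] f ij np by blast
    qed
  qed
qed

lemma cyc_fam:
  assumes "cyc2_iso V E t \<pi>" "t > 0"
  shows "cycfam V E t \<pi>" "auts V E \<subseteq> {\<pi> i j | i j. i<t \<and> j<2}"
proof -
  have bij: "bij_betw (\<lambda>(i, j). \<pi> i j) ({..<t} \<times> {..<2}) (auts V E)"
    and comp: "\<forall>i<t. \<forall>j<2. \<forall>i'<t. \<forall>j'<2. \<pi> i j \<circ> \<pi> i' j' = \<pi> ((i + i') mod t) ((j + j') mod 2)"
    using assms unfolding cyc2_iso_def by auto
  show surj: "auts V E \<subseteq> {\<pi> i j | i j. i<t \<and> j<2}"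
  proof
    fix f assume "f \<in> auts V E"
    then have "f \<in> (\<lambda>(i,j). \<pi> i j) ` ({..<t}\<times>{..<2})" using bij unfolding bij_betw_def by blast
    then obtain i j where "(i,j) \<in> {..<t}\<times>{..<2}" "f = \<pi> i j" by auto
    then show "f \<in> {\<pi> i j | i j. i<t \<and> j<2}" by blast
  qed
  have "id \<in> {\<pi> i j | i j. i<t \<and> j<2}" using surj id_auts by (rule subsetD)
  then obtain i j where ij: "id = \<pi> i j" "i<t" "j<2" by blast
  have "\<pi> 0 0 \<circ> \<pi> i j = \<pi> ((0+i) mod t) ((0+j) mod 2)" using comp ij(2,3) assms(2) by simp
  then have "\<pi> 0 0 \<circ> \<pi> i j = \<pi> i j" using ij by simp
  then have e: "\<pi> 0 0 = id" unfolding ij(1)[symmetric] by simp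
  have inj: "inj_on (\<lambda>(i,j). \<pi> i j) ({..<t}\<times>{..<2})" using bij unfolding bij_betw_def by blast
  have img: "(\<lambda>(i,j). \<pi> i j) ` ({..<t}\<times>{..<2}) = auts V E" using bij unfolding bij_betw_def by blast
  have mem: "\<forall>i<t. \<forall>j<2. \<pi> i j \<in> auts V E"
  proof (intro allI impI)
    fix i j :: nat assume "i<t" "j<2"
    then have "(\<lambda>(i,j). \<pi> i j) (i,j) \<in> auts V E" using img by blast
    then show "\<pi> i j \<in> auts V E" by simp
  qed
  show "cycfam V E t \<pi>" unfolding cycfam_def
    using mem comp e inj by blast
qed



lemma dih_facts:
  assumes "dih2_iso V E t \<pi>" "t > 0"
  shows "\<And>a i j. i<t \<Longrightarrow> j<2 \<Longrightarrow> \<pi> a i j \<in> auts V E"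
    and "\<And>f. f \<in> auts V E \<Longrightarrow> \<exists>a i j. f = \<pi> a i j \<and> i<t \<and> j<2"
    and "\<And>a i j a' i' j'. i<t \<Longrightarrow> j<2 \<Longrightarrow> i'<t \<Longrightarrow> j'<2 \<Longrightarrow> \<pi> a i j = \<pi> a' i' j' \<Longrightarrow> a = a' \<and> i = i' \<and> j = j'"
    and "\<And>a b i j i' j'. i<t \<Longrightarrow> j<2 \<Longrightarrow> i'<t \<Longrightarrow> j'<2 \<Longrightarrow>
        \<pi> a i j \<circ> \<pi> b i' j' = \<pi> (a \<noteq> b) (((if b then t - i else i) + i') mod t) ((j + j') mod 2)"
proof -
  have bij: "bij_betw (\<lambda>(a, i, j). \<pi> a i j) (UNIV \<times> {..<t} \<times> {..<2}) (auts V E)"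
    and comp: "\<forall>a b. \<forall>i<t. \<forall>j<2. \<forall>i'<t. \<forall>j'<2.
        \<pi> a i j \<circ> \<pi> b i' j' =
          \<pi> (a \<noteq> b) (((if b then t - i else i) + i') mod t) ((j + j') mod 2)"
    using assms(1) unfolding dih2_iso_def by (rule conjunct1, rule conjunct2)
  have img: "(\<lambda>(a, i, j). \<pi> a i j) ` (UNIV \<times> {..<t} \<times> {..<2}) = auts V E"
    and inj: "inj_on (\<lambda>(a, i, j). \<pi> a i j) (UNIV \<times> {..<t} \<times> {..<2})"
    using bij unfolding bij_betw_def by blast+
  show "\<pi> a i j \<in> auts V E" if "i<t" "j<2" for a i j
  proof -
    have "(\<lambda>(a, i, j). \<pi> a i j) (a,i,j) \<in> auts V E" using img that by blast
    then show ?thesis by simp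
  qed
  show "\<exists>a i j. f = \<pi> a i j \<and> i<t \<and> j<2" if "f \<in> auts V E" for f
  proof -
    have "f \<in> (\<lambda>(a, i, j). \<pi> a i j) ` (UNIV \<times> {..<t} \<times> {..<2})" using img that by simp
    then obtain x where x: "x \<in> UNIV \<times> {..<t} \<times> {..<2}" "f = (\<lambda>(a, i, j). \<pi> a i j) x"
      by (rule imageE)
    obtain a i j where "x = (a,i,j)" by (cases x)
    then show ?thesis using x by (intro exI[of _ a] exI[of _ i] exI[of _ j]) simp
  qed
  show "a = a' \<and> i = i' \<and> j = j'" if "i<t" "j<2" "i'<t" "j'<2" "\<pi> a i j = \<pi> a' i' j'" for a i j a' i' j'
  proof -
    have "(a,i,j) = (a',i',j')"
      using inj_onD[OF inj, of "(a,i,j)" "(a',i',j')"] that by simp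
    then show ?thesis by simp
  qed
  show "\<pi> a i j \<circ> \<pi> b i' j' = \<pi> (a \<noteq> b) (((if b then t - i else i) + i') mod t) ((j + j') mod 2)"
    if "i<t" "j<2" "i'<t" "j'<2" for a b i j i' j'
    using comp that by (simp only: simp_thms)
qed

lemma dih_cycfam:
  assumes d: "dih2_iso V E t \<pi>" and t: "t > 0"
  shows "cycfam V E t (\<pi> False)"
proof -
  note F = dih_facts[OF d t]
  obtain a i j where ij: "id = \<pi> a i j" "i<t" "j<2" using F(2)[OF id_auts] by blast
  have "\<pi> False 0 0 \<circ> \<pi> a i j = \<pi> (False \<noteq> a) (((if a then t - 0 else 0) + i) mod t) ((0 + j) mod 2)"
    using F(4)[where a=False and b=a and i=0 and j=0 and i'=i and j'=j] ij(2,3) t by simp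
  then have "\<pi> False 0 0 \<circ> \<pi> a i j = \<pi> a i j" using ij(2,3) by (cases a) simp_all
  then have e: "\<pi> False 0 0 = id" unfolding ij(1)[symmetric] by simp
  have comp: "\<forall>i<t. \<forall>j<2. \<forall>i'<t. \<forall>j'<2. \<pi> False i j \<circ> \<pi> False i' j' = \<pi> False ((i+i') mod t) ((j+j') mod 2)"
  proof (intro allI impI)
    fix i j i' j' :: nat assume h: "i<t" "j<2" "i'<t" "j'<2"
    show "\<pi> False i j \<circ> \<pi> False i' j' = \<pi> False ((i+i') mod t) ((j+j') mod 2)"
      using F(4)[OF h, where a=False and b=False] by simp
  qed
  have inj: "inj_on (\<lambda>(i,j). \<pi> False i j) ({..<t}\<times>{..<2})"
  proof (rule inj_onI)
    fix x y assume x: "x \<in> {..<t}\<times>{..<2}" and y: "y \<in> {..<t}\<times>{..<2}"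
      and eq: "(\<lambda>(i,j). \<pi> False i j) x = (\<lambda>(i,j). \<pi> False i j) y"
    obtain i j where xi: "x = (i,j)" by (cases x)
    obtain i' j' where yi: "y = (i',j')" by (cases y)
    have "\<pi> False i j = \<pi> False i' j'" using eq xi yi by simp
    moreover have "i<t" "j<2" "i'<t" "j'<2" using x y xi yi by auto
    ultimately have "i = i' \<and> j = j'" using F(3) by blast
    then show "x = y" using xi yi by simp
  qed
  have mem: "\<forall>i<t. \<forall>j<2. \<pi> False i j \<in> auts V E" using F(1) by blast
  show ?thesis unfolding cycfam_def using mem comp e inj by (intro conjI)
qed

lemma mod_zero_eq:
  fixes i i' t :: nat
  assumes "i < t" "i' < t" "(t - i' + i) mod t = 0"
  shows "i = i'"
proof -
  have "t dvd (t - i' + i)" using assms(3) by (simp add: mod_eq_0_iff_dvd)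
  then obtain c where c: "t - i' + i = t * c" by blast
  have "c \<noteq> 0"
  proof
    assume "c = 0" then show False using c assms by simp
  qed
  moreover have "c < 2"
  proof (rule ccontr)
    assume "\<not> c < 2"
    then have "t*2 \<le> t*c" by simp
    then show False using c assms by linarith
  qed
  ultimately have "c = 1" by auto
  then show ?thesis using c assms by auto
qed

lemma stab_refl:
  assumes d: "dih2_iso V E t \<pi>" and t: "t > 0" and ib: "i<t" "b<(2::nat)"
    and pg: "preserves V (\<pi> True i b) \<phi>" and np: "\<forall>f\<in>Pstar_dih t \<pi>. \<not> preserves V f \<phi>"
  shows "{f \<in> auts V E. preserves V f \<phi>} = {\<pi> False 0 0, \<pi> True i b}"
proof -
  note F = dih_facts[OF d t]
  have cf: "cycfam V E t (\<pi> False)" by (rule dih_cycfam[OF d t])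
  then have e: "\<pi> False 0 0 = id" unfolding cycfam_def by blast
  show ?thesis
  proof
    show "{\<pi> False 0 0, \<pi> True i b} \<subseteq> {f \<in> auts V E. preserves V f \<phi>}"
      using e id_auts pres_id F(1)[OF ib] pg by auto
  next
    show "{f \<in> auts V E. preserves V f \<phi>} \<subseteq> {\<pi> False 0 0, \<pi> True i b}"
    proof
      fix f assume f: "f \<in> {f \<in> auts V E. preserves V f \<phi>}"
      then obtain a i' j' where aij: "f = \<pi> a i' j'" "i'<t" "j'<2" using F(2) by blast
      have nt: "(i'',j'') = (0,0)" if nt1: "i''<t" and nt2: "j''<2" and nt3: "preserves V (\<pi> False i'' j'') \<phi>" for i'' j''
      proof (rule ccontr)
        assume "(i'',j'') \<noteq> (0,0)"
        then obtain g where "g \<in> Pstar_cyc t (\<pi> False)" "preserves V g \<phi>"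
          using nontriv[OF cf t nt1 nt2] nt3 by blast
        then show False using np unfolding Pstar_dih_def by blast
      qed
      show "f \<in> {\<pi> False 0 0, \<pi> True i b}"
      proof (cases a)
        case False
        then have "(i',j') = (0,0)" using nt[of i' j'] aij f by simp
        then show ?thesis using aij False by simp
      next
        case True
        have "preserves V (f \<circ> \<pi> True i b) \<phi>"
          using pres_comp[OF _ pg F(1)[OF ib]] f by blast
        moreover have "f \<circ> \<pi> True i b = \<pi> False (((t - i') + i) mod t) ((j' + b) mod 2)"
          using F(4)[OF aij(2,3) ib, of True True] aij True by simp
        ultimately have "preserves V (\<pi> False (((t - i') + i) mod t) ((j' + b) mod 2)) \<phi>" by simp
        moreover have "((t - i') + i) mod t < t" "(j' + b) mod 2 < 2" using t by simp_all
        ultimately have "(((t - i') + i) mod t, (j' + b) mod 2) = (0,0)"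
          using nt by blast
        then have "i = i'" "(j' + b) mod 2 = 0" using mod_zero_eq[OF ib(1) aij(2)] by auto
        moreover have "j' = b" using \<open>(j' + b) mod 2 = 0\<close> aij(3) ib(2) by (cases j'; cases b) auto
        ultimately show ?thesis using aij True by simp
      qed
    qed
  qed
qed



lemma finite_lab: "is_graph V E \<Longrightarrow> finite (labelings V k)"
  unfolding labelings_def is_graph_def by (intro finite_PiE) auto

lemma notin_Pstar:
  assumes d: "dih2_iso V E t \<pi>" and t: "t > 0" and ib: "i<t" "b<(2::nat)"
  shows "\<pi> True i b \<notin> Pstar_dih t \<pi>"
proof
  assume "\<pi> True i b \<in> Pstar_dih t \<pi>"
  then obtain i' j' where "\<pi> True i b = \<pi> False i' j'" "i'<t" "j'<2"
    using Pstar_elems[of _ t "\<pi> False"] t unfolding Pstar_dih_def by blast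
  then show False using dih_facts(3)[OF d t ib] by blast
qed

lemma neq_set:
  assumes d: "dih2_iso V E t \<pi>" and t: "t > 0" and ib: "i<t" "b<(2::nat)"
  shows "{\<phi> \<in> labelings V k. {f \<in> auts V E. preserves V f \<phi>} = {\<pi> False 0 0, \<pi> True i b}}
       = {\<phi> \<in> {\<phi> \<in> labelings V k. preserves V (\<pi> True i b) \<phi>}. \<forall>f\<in>Pstar_dih t \<pi>. \<not> preserves V f \<phi>}"
proof (intro equalityI subsetI)
  fix \<phi> assume "\<phi> \<in> {\<phi> \<in> labelings V k. {f \<in> auts V E. preserves V f \<phi>} = {\<pi> False 0 0, \<pi> True i b}}"
  then have l: "\<phi> \<in> labelings V k" and st: "{f \<in> auts V E. preserves V f \<phi>} = {\<pi> False 0 0, \<pi> True i b}"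
    by auto
  have cf: "cycfam V E t (\<pi> False)" by (rule dih_cycfam[OF d t])
  then have e: "\<pi> False 0 0 = id" unfolding cycfam_def by blast
  have pg: "preserves V (\<pi> True i b) \<phi>" using st by blast
  have np: "\<not> preserves V f \<phi>" if f: "f \<in> Pstar_dih t \<pi>" for f
  proof
    assume "preserves V f \<phi>"
    moreover have "f \<in> auts V E" "f \<noteq> id" using Pstar_props[OF cf t] f unfolding Pstar_dih_def by auto
    ultimately have "f \<in> {\<pi> False 0 0, \<pi> True i b}" using st by blast
    then show False using \<open>f \<noteq> id\<close> e notin_Pstar[OF d t ib] f by auto
  qed
  show "\<phi> \<in> {\<phi> \<in> {\<phi> \<in> labelings V k. preserves V (\<pi> True i b) \<phi>}. \<forall>f\<in>Pstar_dih t \<pi>. \<not> preserves V f \<phi>}"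
    using l pg np by blast
next
  fix \<phi> assume "\<phi> \<in> {\<phi> \<in> {\<phi> \<in> labelings V k. preserves V (\<pi> True i b) \<phi>}. \<forall>f\<in>Pstar_dih t \<pi>. \<not> preserves V f \<phi>}"
  then have l: "\<phi> \<in> labelings V k" and pg: "preserves V (\<pi> True i b) \<phi>"
    and np: "\<forall>f\<in>Pstar_dih t \<pi>. \<not> preserves V f \<phi>" by auto
  show "\<phi> \<in> {\<phi> \<in> labelings V k. {f \<in> auts V E. preserves V f \<phi>} = {\<pi> False 0 0, \<pi> True i b}}"
    using l stab_refl[OF d t ib pg np] by blast
qed

lemma part_neq:
  assumes g: "is_graph V E" and d: "dih2_iso V E t \<pi>" and t: "t > 0" and ib: "i<t" "b<(2::nat)"
  shows "int (Neq V E k {\<pi> False 0 0, \<pi> True i b}) =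
             (\<Sum>P \<in> {P. {\<pi> True i b} \<subseteq> P \<and> P \<subseteq> {\<pi> True i b} \<union> Pstar_dih t \<pi>}.
                (-1) ^ (card P - 1) * int (Nge V k P))"
proof -
  define g where "g = \<pi> True i b"
  define Pd where "Pd = Pstar_dih t \<pi>"
  define A where "A = {\<phi> \<in> labelings V k. preserves V g \<phi>}"
  have gn: "g \<notin> Pd" unfolding g_def Pd_def by (rule notin_Pstar[OF d t ib])
  have fPd: "finite Pd" unfolding Pd_def Pstar_dih_def by (rule Pstar_finite[OF t])
  have fA: "finite A" unfolding A_def using finite_lab[OF g] by simp
  have seteq: "{P. {g} \<subseteq> P \<and> P \<subseteq> {g} \<union> Pd} = insert g ` Pow Pd"
  proof (intro equalityI subsetI)
    fix P assume "P \<in> {P. {g} \<subseteq> P \<and> P \<subseteq> {g} \<union> Pd}"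
    then have "P = insert g (P - {g})" "P - {g} \<in> Pow Pd" by auto
    then show "P \<in> insert g ` Pow Pd" by (rule image_eqI)
  qed auto
  have inj: "inj_on (insert g) (Pow Pd)"
  proof (rule inj_onI)
    fix Q Q' assume "Q \<in> Pow Pd" "Q' \<in> Pow Pd" "insert g Q = insert g Q'"
    then show "Q = Q'" using gn by (metis PowD in_mono insert_ident)
  qed
  have "(\<Sum>P \<in> {P. {g} \<subseteq> P \<and> P \<subseteq> {g} \<union> Pd}. (-1) ^ (card P - 1) * int (Nge V k P))
      = (\<Sum>Q \<in> Pow Pd. (-1) ^ (card (insert g Q) - 1) * int (Nge V k (insert g Q)))"
    unfolding seteq using inj by (simp add: sum.reindex)
  also have "\<dots> = (\<Sum>Q \<in> Pow Pd. (-1) ^ card Q * int (card {\<phi>\<in>A. \<forall>f\<in>Q. preserves V f \<phi>}))"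
  proof (rule sum.cong)
    fix Q assume Q: "Q \<in> Pow Pd"
    then have "finite Q" "g \<notin> Q" using fPd gn finite_subset by auto
    then have c: "card (insert g Q) - 1 = card Q" by simp
    have "{\<phi> \<in> labelings V k. \<forall>f\<in>insert g Q. preserves V f \<phi>} = {\<phi>\<in>A. \<forall>f\<in>Q. preserves V f \<phi>}"
      unfolding A_def by auto
    then show "(-1) ^ (card (insert g Q) - 1) * int (Nge V k (insert g Q))
        = (-1) ^ card Q * int (card {\<phi>\<in>A. \<forall>f\<in>Q. preserves V f \<phi>})"
      unfolding Nge_def c by simp
  qed simp
  also have "\<dots> = int (card {\<phi>\<in>A. \<forall>f\<in>Pd. \<not> preserves V f \<phi>})"
    by (rule IE[OF fA fPd, symmetric])
  also have "{\<phi>\<in>A. \<forall>f\<in>Pd. \<not> preserves V f \<phi>}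
      = {\<phi> \<in> labelings V k. {f \<in> auts V E. preserves V f \<phi>} = {\<pi> False 0 0, \<pi> True i b}}"
    unfolding A_def Pd_def g_def by (rule neq_set[OF d t ib, symmetric])
  finally show ?thesis unfolding Neq_def g_def Pd_def by simp
qed

lemma part_L:
  assumes g: "is_graph V E" and d: "dih2_iso V E t \<pi>" and t: "t > 0"
  shows "int (Lcount V E k) =
          (\<Sum>P \<in> Pow (Pstar_dih t \<pi>). (-1) ^ card P * int (Nge V k P))
          - (\<Sum>b<2. \<Sum>i<t. int (Neq V E k {\<pi> False 0 0, \<pi> True i b}))"
proof -
  note F = dih_facts[OF d t]
  have cf: "cycfam V E t (\<pi> False)" by (rule dih_cycfam[OF d t])
  then have e: "\<pi> False 0 0 = id" unfolding cycfam_def by blast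
  define Pd where "Pd = Pstar_dih t \<pi>"
  define Lab where "Lab = labelings V k"
  define N0 where "N0 = {\<phi>\<in>Lab. \<forall>f\<in>Pd. \<not> preserves V f \<phi>}"
  define D where "D = {\<phi>\<in>Lab. distinguishing V E \<phi>}"
  define M where "M = (\<lambda>i b. {\<phi> \<in> Lab. {f \<in> auts V E. preserves V f \<phi>} = {\<pi> False 0 0, \<pi> True i b}})"
  have fPd: "finite Pd" unfolding Pd_def Pstar_dih_def by (rule Pstar_finite[OF t])
  have fLab: "finite Lab" unfolding Lab_def using finite_lab[OF g] .
  have IE1: "int (card N0) = (\<Sum>P \<in> Pow Pd. (-1) ^ card P * int (Nge V k P))"
    unfolding N0_def Nge_def Lab_def using IE[OF finite_lab[OF g] fPd] .
  have Pdprops: "f \<in> auts V E" "f \<noteq> id" if "f \<in> Pd" for f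
    using Pstar_props[OF cf t] that unfolding Pd_def Pstar_dih_def by auto
  have Mdisj: "i = i' \<and> b = b'" if "\<phi> \<in> M i b" "\<phi> \<in> M i' b'" "i<t" "b<2" "i'<t" "b'<2" for \<phi> i b i' b'
  proof -
    have "{\<pi> False 0 0, \<pi> True i b} = {\<pi> False 0 0, \<pi> True i' b'}" using that unfolding M_def by auto
    then have "\<pi> True i b = \<pi> False 0 0 \<or> \<pi> True i b = \<pi> True i' b'" by blast
    moreover have "\<pi> True i b \<noteq> \<pi> False 0 0" using F(3)[of i b 0 0 True False] that t by auto
    ultimately have "\<pi> True i b = \<pi> True i' b'" by blast
    then show ?thesis using F(3)[of i b i' b' True True] that by auto
  qed
  have DM: "D \<inter> M i b = {}" if "i<t" "b<2" for i b
  proof (rule ccontr)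
    assume "D \<inter> M i b \<noteq> {}"
    then obtain \<phi> where \<phi>: "\<phi> \<in> D" "\<phi> \<in> M i b" by blast
    then have "\<pi> True i b \<in> auts V E" "preserves V (\<pi> True i b) \<phi>" unfolding M_def by auto
    then have "\<pi> True i b = id" using \<phi>(1) unfolding D_def distinguishing_def by blast
    then show False using F(3)[of i b 0 0 True False] that t e by auto
  qed
  have N0eq: "N0 = D \<union> (\<Union>b\<in>{..<2}. \<Union>i\<in>{..<t}. M i b)"
  proof (intro equalityI subsetI)
    fix \<phi> assume \<phi>: "\<phi> \<in> N0"
    then have l: "\<phi> \<in> Lab" and np: "\<forall>f\<in>Pd. \<not> preserves V f \<phi>" unfolding N0_def by auto
    show "\<phi> \<in> D \<union> (\<Union>b\<in>{..<2}. \<Union>i\<in>{..<t}. M i b)"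
    proof (cases "distinguishing V E \<phi>")
      case True then show ?thesis using l unfolding D_def by blast
    next
      case False
      then obtain f where f: "f \<in> auts V E" "preserves V f \<phi>" "f \<noteq> id"
        unfolding distinguishing_def by blast
      then obtain a i j where aij: "f = \<pi> a i j" "i<t" "j<2" using F(2) by blast
      show ?thesis
      proof (cases a)
        case False
        then have "(i,j) \<noteq> (0,0)" using aij f e by auto
        moreover have "preserves V (\<pi> False i j) \<phi>" using f aij False by simp
        ultimately obtain h where "h \<in> Pstar_cyc t (\<pi> False)" "preserves V h \<phi>"
          using nontriv[OF cf t aij(2,3)] by blast
        then show ?thesis using np unfolding Pd_def Pstar_dih_def by blast
      next
        case True
        have "preserves V (\<pi> True i j) \<phi>" using f aij True by simp
        from stab_refl[OF d t aij(2,3) this np[unfolded Pd_def]]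
        have "\<phi> \<in> M i j" unfolding M_def using l by blast
        then show ?thesis using aij by blast
      qed
    qed
  next
    fix \<phi> assume "\<phi> \<in> D \<union> (\<Union>b\<in>{..<2}. \<Union>i\<in>{..<t}. M i b)"
    then show "\<phi> \<in> N0"
    proof (elim UnE UN_E)
      assume "\<phi> \<in> D" then show ?thesis
        using Pdprops unfolding D_def N0_def distinguishing_def by blast
    next
      fix b i assume bi: "b \<in> {..<2}" "i \<in> {..<t}" "\<phi> \<in> M i b"
      then have "\<phi> \<in> {\<phi> \<in> {\<phi> \<in> labelings V k. preserves V (\<pi> True i b) \<phi>}. \<forall>f\<in>Pstar_dih t \<pi>. \<not> preserves V f \<phi>}"
        using neq_set[OF d t, of i b k] unfolding M_def Lab_def by auto
      then show ?thesis unfolding N0_def Lab_def Pd_def by blast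
    qed
  qed
  have fM: "finite (M i b)" for i b unfolding M_def using fLab by simp
  have fD: "finite D" unfolding D_def using fLab by simp
  have cardU: "card (\<Union>b\<in>{..<2}. \<Union>i\<in>{..<t}. M i b) = (\<Sum>b<2. \<Sum>i<t. card (M i b))"
  proof -
    have "card (\<Union>b\<in>{..<2}. \<Union>i\<in>{..<t}. M i b) = (\<Sum>b<2. card (\<Union>i\<in>{..<t}. M i b))"
    proof (rule card_UN_disjoint)
      show "finite {..<2::nat}" by simp
      show "\<forall>b\<in>{..<2}. finite (\<Union>i\<in>{..<t}. M i b)" using fM by simp
      show "\<forall>b\<in>{..<2}. \<forall>b'\<in>{..<2}. b \<noteq> b' \<longrightarrow> (\<Union>i\<in>{..<t}. M i b) \<inter> (\<Union>i\<in>{..<t}. M i b') = {}"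
        using Mdisj by fastforce
    qed
    also have "\<dots> = (\<Sum>b<2. \<Sum>i<t. card (M i b))"
    proof (rule sum.cong)
      fix b :: nat assume "b \<in> {..<2}"
      show "card (\<Union>i\<in>{..<t}. M i b) = (\<Sum>i<t. card (M i b))"
      proof (rule card_UN_disjoint)
        show "finite {..<t}" by simp
        show "\<forall>i\<in>{..<t}. finite (M i b)" using fM by simp
        show "\<forall>i\<in>{..<t}. \<forall>i'\<in>{..<t}. i \<noteq> i' \<longrightarrow> M i b \<inter> M i' b = {}"
          using Mdisj \<open>b \<in> {..<2}\<close> by fastforce
      qed
    qed simp
    finally show ?thesis .
  qed
  have "card N0 = card D + card (\<Union>b\<in>{..<2}. \<Union>i\<in>{..<t}. M i b)"
    unfolding N0eq
  proof (rule card_Un_disjoint)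
    show "finite D" by (rule fD)
    show "finite (\<Union>b\<in>{..<2}. \<Union>i\<in>{..<t}. M i b)" using fM by simp
    show "D \<inter> (\<Union>b\<in>{..<2}. \<Union>i\<in>{..<t}. M i b) = {}" using DM by blast
  qed
  then have "int (card N0) = int (card D) + (\<Sum>b<2. \<Sum>i<t. int (card (M i b)))"
    unfolding cardU by simp
  moreover have "Lcount V E k = card D" unfolding Lcount_def D_def Lab_def ..
  moreover have "Neq V E k {\<pi> False 0 0, \<pi> True i b} = card (M i b)" for i b
    unfolding Neq_def M_def Lab_def ..
  ultimately show ?thesis using IE1 unfolding Pd_def by simp
qed

lemma part_cyc:
  assumes g: "is_graph V E" and c: "cyc2_iso V E t \<pi>" and t: "t > 0"
  shows "int (Lcount V E k) = (\<Sum>P \<in> Pow (Pstar_cyc t \<pi>). (-1) ^ card P * int (Nge V k P))"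
proof -
  have cf: "cycfam V E t \<pi>" and surj: "auts V E \<subseteq> {\<pi> i j | i j. i<t \<and> j<2}"
    using cyc_fam[OF c t] by blast+
  have "{\<phi> \<in> labelings V k. distinguishing V E \<phi>} = {\<phi> \<in> labelings V k. \<forall>f\<in>Pstar_cyc t \<pi>. \<not> preserves V f \<phi>}"
    using distinguishing_iff[OF cf t surj] by blast
  then show ?thesis unfolding Lcount_def Nge_def
    using IE[OF finite_lab[OF g] Pstar_finite[OF t]] by simp
qed

theorem theorem4:
  fixes V :: "'a set" and E :: "'a \<Rightarrow> 'a \<Rightarrow> bool" and t k :: nat
  assumes "is_graph V E" and "t > 0" and "k > 0"
  shows
    "(\<forall>\<pi>. cyc2_iso V E t \<pi> \<longrightarrow>
        int (Lcount V E k) = (\<Sum>P \<in> Pow (Pstar_cyc t \<pi>). (-1) ^ card P * int (Nge V k P)))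
     \<and>
     (\<forall>\<pi>. dih2_iso V E t \<pi> \<longrightarrow>
        (\<forall>b<2. \<forall>i<t.
           int (Neq V E k {\<pi> False 0 0, \<pi> True i b}) =
             (\<Sum>P \<in> {P. {\<pi> True i b} \<subseteq> P \<and> P \<subseteq> {\<pi> True i b} \<union> Pstar_dih t \<pi>}.
                (-1) ^ (card P - 1) * int (Nge V k P)))
        \<and>
        int (Lcount V E k) =
          (\<Sum>P \<in> Pow (Pstar_dih t \<pi>). (-1) ^ card P * int (Nge V k P))
          - (\<Sum>b<2. \<Sum>i<t. int (Neq V E k {\<pi> False 0 0, \<pi> True i b})))"
  using part_cyc[OF assms(1) _ assms(2)] part_neq[OF assms(1) _ assms(2)] part_L[OF assms(1) _ assms(2)]
  by blast

end
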